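(* Let $G=(V,E)$ be a finite simple undirected graph, $G_0:=G$, and let $W_1,\dots,W_r$ be distinct subsets of $V$ such that for every $t\in\{1,\dots,r\}$, $W_t$ is a clique of $G_{t-1}$ with $|W_t|\ge2$ and $G_t:=G_{t-1}\mid W_t$. Let $F_0:=STAB(G)$, $F_t:=\{x\in STAB(G)\mid x_{W_j}=1,\ j=1,\dots,t\}$, and $\mathcal S_t:=\mathcal S(G)\cap F_t$. Let $c^\top x\le d$, with $c\in\mathbb R^V$ and $d\in\mathbb R$, be a valid inequality for $STAB(G_r)$. For $t\in\{0,\dots,r\}$ define \[ f_t(x)=c^\top x+\sum_{\ell=t+1}^r\lambda^S_\ell(x_{W_\ell}-1), \] where, recursively for $\ell=r,r-1,\dots,1$, \[ \lambda^S_\ell=\max\{f_\ell(x)-d\mid x\in\mathcal S_{\ell-1},\ x_{W_\ell}=0\}, \] with the convention $\max\emptyset=0$. Then $f_t(x)\le d$ is valid for $F_t$ for every $t\in\{0,\dots,r\}$.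
   Context: For a graph $G=(V,E)$, $\mathcal S(G)\subseteq\{0,1\}^V$ is the set of characteristic vectors of stable sets of $G$, and $STAB(G)=\mathrm{conv}\,\mathcal S(G)$. For $W\subseteq V$ and $x\in\mathbb R^V$, $x_W=\sum_{v\in W}x_v$. The clique projection of a clique $W$ ($|W|\ge2$) of a graph $H=(V,E_H)$ is $H\mid W=(V,E_H\cup\{uv\notin E_H\mid u\ne v,\ W\subseteq N_H(u)\cup N_H(v)\})$, where $N_H(u)$ is the neighborhood of $u$ in $H$. *)

theory Defs
  imports "HOL-Analysis.Analysis"
begin

text \<open>Finite simple graphs on the vertex set V = UNIV of a finite type 'v.
  The edge set is a set of 2-element vertex sets.\<close>

definition simple_graph :: "'v set set \<Rightarrow> bool" where
  "simple_graph E \<longleftrightarrow> (\<forall>e\<in>E. card e = 2)"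

definition nbhd :: "'v set set \<Rightarrow> 'v \<Rightarrow> 'v set" where
  "nbhd E u = {v. {u, v} \<in> E}"

definition is_clique :: "'v set set \<Rightarrow> 'v set \<Rightarrow> bool" where
  "is_clique E W \<longleftrightarrow> (\<forall>u\<in>W. \<forall>v\<in>W. u \<noteq> v \<longrightarrow> {u, v} \<in> E)"

definition is_stable :: "'v set set \<Rightarrow> 'v set \<Rightarrow> bool" where
  "is_stable E S \<longleftrightarrow> (\<forall>u\<in>S. \<forall>v\<in>S. {u, v} \<notin> E)"

definition clique_proj :: "'v set set \<Rightarrow> 'v set \<Rightarrow> 'v set set" where
  "clique_proj E W = E \<union> {{u, v} | u v. {u, v} \<notin> E \<and> u \<noteq> v \<and> W \<subseteq> nbhd E u \<union> nbhd E v}"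

definition char_vec :: "'v::finite set \<Rightarrow> real ^ 'v" where
  "char_vec S = (\<chi> v. if v \<in> S then 1 else 0)"

definition stab_vecs :: "'v::finite set set \<Rightarrow> (real ^ 'v) set" where
  "stab_vecs E = {char_vec S | S. is_stable E S}"

definition STAB :: "'v::finite set set \<Rightarrow> (real ^ 'v) set" where
  "STAB E = convex hull (stab_vecs E)"

definition xsum :: "'v::finite set \<Rightarrow> real ^ 'v \<Rightarrow> real" where
  "xsum W x = (\<Sum>v\<in>W. x $ v)"

primrec Gseq :: "'v set set \<Rightarrow> (nat \<Rightarrow> 'v set) \<Rightarrow> nat \<Rightarrow> 'v set set" where
  "Gseq E W 0 = E"
| "Gseq E W (Suc t) = clique_proj (Gseq E W t) (W (Suc t))"

definition Fset :: "'v::finite set set \<Rightarrow> (nat \<Rightarrow> 'v set) \<Rightarrow> nat \<Rightarrow> (real ^ 'v) set" where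
  "Fset E W t = {x \<in> STAB E. \<forall>j\<in>{1..t}. xsum (W j) x = 1}"

definition Sset :: "'v::finite set set \<Rightarrow> (nat \<Rightarrow> 'v set) \<Rightarrow> nat \<Rightarrow> (real ^ 'v) set" where
  "Sset E W t = stab_vecs E \<inter> Fset E W t"

definition max0 :: "real set \<Rightarrow> real" where
  "max0 A = (if A = {} then 0 else Max A)"

definition fval :: "(nat \<Rightarrow> 'v set) \<Rightarrow> nat \<Rightarrow> real ^ 'v \<Rightarrow> (nat \<Rightarrow> real) \<Rightarrow> nat \<Rightarrow> real ^ 'v \<Rightarrow> real"
  where "fval W r c lam t x = c \<bullet> x + (\<Sum>l\<in>{t+1..r}. lam l * (xsum (W l) x - 1))"

text \<open>Recursive computation of lambda^S_l for l = r, r-1, ..., 1: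
  after n steps, the values lambda^S_r, ..., lambda^S_{r-n+1} are set.\<close>
primrec lam_steps :: "'v::finite set set \<Rightarrow> (nat \<Rightarrow> 'v set) \<Rightarrow> nat \<Rightarrow> real ^ 'v \<Rightarrow> real
    \<Rightarrow> nat \<Rightarrow> (nat \<Rightarrow> real)" where
  "lam_steps E W r c d 0 = (\<lambda>_. 0)"
| "lam_steps E W r c d (Suc n) =
     (let L = lam_steps E W r c d n; l = r - n in
       L(l := max0 {fval W r c L l x - d | x. x \<in> Sset E W (l - 1) \<and> xsum (W l) x = 0}))"

text \<open>lambda^S_l (meaningful for 1 \<le> l \<le> r).\<close>
definition lamS :: "'v::finite set set \<Rightarrow> (nat \<Rightarrow> 'v set) \<Rightarrow> nat \<Rightarrow> real ^ 'v \<Rightarrow> real \<Rightarrow> nat \<Rightarrow> real"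
  where "lamS E W r c d = lam_steps E W r c d r"

end

theory Submission
  imports Defs
begin

lemma xsum_char: "xsum W (char_vec S) = real (card (W \<inter> S))"
  unfolding xsum_def char_vec_def
  by (simp add: sum.If_cases Int_def)

lemma xsum_lin: "xsum W (u *\<^sub>R x + v *\<^sub>R y) = u * xsum W x + v * xsum W y"
  unfolding xsum_def by (simp add: sum.distrib sum_distrib_left)

lemma finite_stab: "finite (stab_vecs (E::'v::finite set set))"
proof -
  have "stab_vecs E \<subseteq> char_vec ` UNIV" unfolding stab_vecs_def by auto
  moreover have "finite (range (char_vec :: 'v set \<Rightarrow> real ^ 'v))" by simp
  ultimately show ?thesis by (rule finite_subset)
qed

lemma stable_G:
  assumes "is_stable E S" "\<forall>j\<in>{1..t}. card (W j \<inter> S) = 1"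
  shows "is_stable (Gseq E W t) S"
  using assms(2)
proof (induction t)
  case 0
  then show ?case using assms(1) by simp
next
  case (Suc t)
  have st: "is_stable (Gseq E W t) S" using Suc by auto
  have "card (W (Suc t) \<inter> S) = 1" using Suc.prems by auto
  then obtain w where "W (Suc t) \<inter> S = {w}" by (rule card_1_singletonE)
  then have w: "w \<in> W (Suc t)" "w \<in> S" by blast+
  show ?case unfolding is_stable_def
  proof (intro ballI)
    fix u v assume uv: "u \<in> S" "v \<in> S"
    have n1: "{u, v} \<notin> Gseq E W t" using st uv unfolding is_stable_def by auto
    have n2: "{u,v} \<notin> {{u', v'} | u' v'. {u', v'} \<notin> Gseq E W t \<and> u' \<noteq> v' \<and> W (Suc t) \<subseteq> nbhd (Gseq E W t) u' \<union> nbhd (Gseq E W t) v'}"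
    proof
      assume "{u,v} \<in> {{u', v'} | u' v'. {u', v'} \<notin> Gseq E W t \<and> u' \<noteq> v' \<and> W (Suc t) \<subseteq> nbhd (Gseq E W t) u' \<union> nbhd (Gseq E W t) v'}"
      then obtain u' v' where e: "{u,v} = {u',v'}" "W (Suc t) \<subseteq> nbhd (Gseq E W t) u' \<union> nbhd (Gseq E W t) v'" by blast
      have "u' \<in> S" "v' \<in> S" using e(1) uv by (auto simp: doubleton_eq_iff)
      moreover have "{u',w} \<in> Gseq E W t \<or> {v',w} \<in> Gseq E W t" using e(2) w unfolding nbhd_def by auto
      ultimately show False using st w unfolding is_stable_def by blast
    qed
    show "{u, v} \<notin> Gseq E W (Suc t)"
    proof
      assume "{u, v} \<in> Gseq E W (Suc t)"
      then have m: "{u, v} \<in> Gseq E W t \<union> {{u', v'} | u' v'. {u', v'} \<notin> Gseq E W t \<and> u' \<noteq> v' \<and> W (Suc t) \<subseteq> nbhd (Gseq E W t) u' \<union> nbhd (Gseq E W t) v'}"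
        by (simp only: Gseq.simps clique_proj_def)
      show False using m
      proof (rule UnE)
        assume "{u, v} \<in> Gseq E W t" from n1 this show False by (rule notE)
      next
        assume "{u, v} \<in> {{u', v'} | u' v'. {u', v'} \<notin> Gseq E W t \<and> u' \<noteq> v' \<and> W (Suc t) \<subseteq> nbhd (Gseq E W t) u' \<union> nbhd (Gseq E W t) v'}"
        from n2 this show False by (rule notE)
      qed
    qed
  qed
qed

lemma clique_card:
  fixes W :: "'v::finite set"
  assumes "is_stable G S" "is_clique G W"
  shows "card (W \<inter> S) \<le> 1"
proof -
  have a: "\<forall>a\<in>W \<inter> S. \<forall>b\<in>W \<inter> S. a = b" using assms unfolding is_stable_def is_clique_def by blast
  have fin: "finite (W \<inter> S)" by simp
  have "card (W \<inter> S) \<le> Suc 0" using card_le_Suc0_iff_eq[OF fin] a by blast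
  thus ?thesis by simp
qed

lemma aux_a1: fixes u v X Y Ll :: real assumes "u + v = 1"
  shows "Ll * ((u * X + v * Y) - 1) = u * (Ll * (X - 1)) + v * (Ll * (Y - 1))"
proof -
  have "Ll * ((u * X + v * Y) - 1) = Ll * ((u * X + v * Y) - (u + v))" using assms by simp
  also have "\<dots> = u * (Ll * (X - 1)) + v * (Ll * (Y - 1))" by (simp add: algebra_simps)
  finally show ?thesis .
qed

lemma aux_a2: fixes u v d :: real assumes uv: "u+v = 1" shows "u * d + v * d = d"
proof -
  have "u * d + v * d = (u + v) * d" by (rule distrib_right[symmetric])
  then show ?thesis using uv by simp
qed

lemma fval_convex: "convex {x. fval W r c L t x \<le> d}"
  unfolding convex_def
proof (intro allI impI ballI)
  fix x y :: "real^'a" and u v :: real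
  assume x: "x \<in> {x. fval W r c L t x \<le> d}" and y: "y \<in> {x. fval W r c L t x \<le> d}"
    and uv: "0 \<le> u" "0 \<le> v" "u + v = 1"
  have fx: "fval W r c L t x \<le> d" and fy: "fval W r c L t y \<le> d" using x y by auto
  have "(\<Sum>l\<in>{t+1..r}. L l * (xsum (W l) (u *\<^sub>R x + v *\<^sub>R y) - 1))
     = (\<Sum>l\<in>{t+1..r}. u * (L l * (xsum (W l) x - 1)) + v * (L l * (xsum (W l) y - 1)))"
  proof (rule sum.cong)
    fix l show "L l * (xsum (W l) (u *\<^sub>R x + v *\<^sub>R y) - 1) = u * (L l * (xsum (W l) x - 1)) + v * (L l * (xsum (W l) y - 1))"
      unfolding xsum_lin by (rule aux_a1[OF uv(3)])
  qed (rule refl)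
  also have "\<dots> = u * (\<Sum>l\<in>{t+1..r}. L l * (xsum (W l) x - 1)) + v * (\<Sum>l\<in>{t+1..r}. L l * (xsum (W l) y - 1))"
    by (simp only: sum.distrib flip: sum_distrib_left)
  finally have e: "(\<Sum>l\<in>{t+1..r}. L l * (xsum (W l) (u *\<^sub>R x + v *\<^sub>R y) - 1)) = u * (\<Sum>l\<in>{t+1..r}. L l * (xsum (W l) x - 1)) + v * (\<Sum>l\<in>{t+1..r}. L l * (xsum (W l) y - 1))" .
  have ci: "c \<bullet> (u *\<^sub>R x + v *\<^sub>R y) = u * (c \<bullet> x) + v * (c \<bullet> y)"
    by (simp only: inner_add_right inner_scaleR_right)
  have "fval W r c L t (u *\<^sub>R x + v *\<^sub>R y) = u * fval W r c L t x + v * fval W r c L t y"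
    unfolding fval_def e ci by (simp only: distrib_left add_ac)
  also have "\<dots> \<le> u * d + v * d"
    by (intro add_mono mult_left_mono fx fy uv(1) uv(2))
  also have "\<dots> = d" by (rule aux_a2[OF uv(3)])
  finally show "u *\<^sub>R x + v *\<^sub>R y \<in> {x. fval W r c L t x \<le> d}" by (simp only: mem_Collect_eq)
qed

lemma xsum_sum: "xsum W (\<Sum>s\<in>A. f s *\<^sub>R s) = (\<Sum>s\<in>A. f s * xsum W s)"
  unfolding xsum_def by (simp add: sum_distrib_left sum.swap[of _ W])

lemma agree:
  "n \<le> m \<Longrightarrow> r - n < k \<Longrightarrow> lam_steps E W r c d m k = lam_steps E W r c d n k"
proof (induction m)
  case 0 then show ?case by simp
next
  case (Suc m)
  show ?case
  proof (cases "n = Suc m")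
    case True then show ?thesis by simp
  next
    case False
    then have "n \<le> m" using Suc.prems by simp
    then have "k \<noteq> r - m" using Suc.prems by simp
    then show ?thesis using Suc.IH[OF \<open>n \<le> m\<close> Suc.prems(2)] by (simp add: Let_def)
  qed
qed

lemma Sset_stable:
  assumes "s \<in> Sset E W t"
  shows "\<exists>S. s = char_vec S \<and> is_stable (Gseq E W t) S"
proof -
  obtain S where S: "s = char_vec S" "is_stable E S" using assms unfolding Sset_def stab_vecs_def by auto
  have "\<forall>j\<in>{1..t}. card (W j \<inter> S) = 1"
    using assms S(1) unfolding Sset_def Fset_def by (auto simp: xsum_char)
  then show ?thesis using stable_G[OF S(2)] S(1) by blast
qed

lemma Fset_hull:
  fixes E :: "'v::finite set set"
  assumes cl: "\<forall>j\<in>{1..t}. is_clique (Gseq E W (j - 1)) (W j)"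
    and x: "x \<in> Fset E W t"
  shows "x \<in> convex hull (Sset E W t)"
proof -
  have "x \<in> convex hull (stab_vecs E)" using x unfolding Fset_def STAB_def by auto
  then obtain \<mu> where mu: "\<forall>s\<in>stab_vecs E. 0 \<le> \<mu> s" "sum \<mu> (stab_vecs E) = 1"
     "(\<Sum>s\<in>stab_vecs E. \<mu> s *\<^sub>R s) = x"
    using convex_hull_finite[OF finite_stab[of E]] by auto
  have claim: "\<forall>s\<in>stab_vecs E. \<mu> s > 0 \<longrightarrow> (\<forall>i\<in>{1..j}. xsum (W i) s = 1)" if "j \<le> t" for j
    using that
  proof (induction j)
    case 0 then show ?case by simp
  next
    case (Suc j)
    have IH: "\<forall>s\<in>stab_vecs E. \<mu> s > 0 \<longrightarrow> (\<forall>i\<in>{1..j}. xsum (W i) s = 1)" using Suc by simp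
    have le1: "xsum (W (Suc j)) s \<le> 1" if s1: "s \<in> stab_vecs E" and s2: "\<mu> s > 0" for s
    proof -
      obtain S where S: "s = char_vec S" "is_stable E S" using s1 unfolding stab_vecs_def by auto
      have "\<forall>i\<in>{1..j}. card (W i \<inter> S) = 1" using IH s1 s2 S(1) by (auto simp: xsum_char)
      then have "is_stable (Gseq E W j) S" using stable_G[OF S(2)] by blast
      moreover have "is_clique (Gseq E W j) (W (Suc j))" using cl Suc.prems by force
      ultimately have "card (W (Suc j) \<inter> S) \<le> 1" by (rule clique_card)
      then show ?thesis using S(1) by (simp add: xsum_char)
    qed
    have nn: "0 \<le> \<mu> s * (1 - xsum (W (Suc j)) s)" if s: "s \<in> stab_vecs E" for s
    proof -
      show "0 \<le> \<mu> s * (1 - xsum (W (Suc j)) s)"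
      proof (cases "\<mu> s > 0")
        case True then show ?thesis using le1[OF s] by simp
      next
        case False then have "\<mu> s = 0" using mu(1) s by force
        then show ?thesis by simp
      qed
    qed
    have "xsum (W (Suc j)) x = 1" using x Suc.prems unfolding Fset_def by auto
    then have "(\<Sum>s\<in>stab_vecs E. \<mu> s * xsum (W (Suc j)) s) = 1" using mu(3) xsum_sum by metis
    then have "(\<Sum>s\<in>stab_vecs E. \<mu> s * (1 - xsum (W (Suc j)) s)) = 0"
      using mu(2) by (simp add: right_diff_distrib sum_subtractf)
    then have z: "\<forall>s\<in>stab_vecs E. \<mu> s * (1 - xsum (W (Suc j)) s) = 0"
      using sum_nonneg_eq_0_iff[OF finite_stab[of E], of "\<lambda>s. \<mu> s * (1 - xsum (W (Suc j)) s)"] nn by blast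
    show ?case
    proof (intro ballI impI)
      fix s i assume s: "s \<in> stab_vecs E" "\<mu> s > 0" and i: "i \<in> {1..Suc j}"
      show "xsum (W i) s = 1"
      proof (cases "i = Suc j")
        case True then show ?thesis using z s by auto
      next
        case False then show ?thesis using IH s i by auto
      qed
    qed
  qed
  let ?T = "{s\<in>stab_vecs E. \<mu> s > 0}"
  have T: "?T \<subseteq> Sset E W t"
    using claim[of t] unfolding Sset_def Fset_def STAB_def by (auto intro: hull_inc)
  have z0: "\<forall>s\<in>stab_vecs E - ?T. \<mu> s = 0" using mu(1) by force
  have sub: "?T \<subseteq> stab_vecs E" by blast
  have fT: "finite ?T" using finite_subset[OF sub finite_stab[of E]] .
  have "sum \<mu> (stab_vecs E) = sum \<mu> ?T" using sum.mono_neutral_right[OF finite_stab[of E] sub, of \<mu>] z0 by blast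
  then have "sum \<mu> ?T = 1" using mu(2) by simp
  moreover have "(\<Sum>s\<in>?T. \<mu> s *\<^sub>R s) = x"
  proof -
    have "\<forall>i\<in>stab_vecs E - ?T. \<mu> i *\<^sub>R i = 0" using z0 by (metis scale_zero_left)
    then have "(\<Sum>s\<in>stab_vecs E. \<mu> s *\<^sub>R s) = (\<Sum>s\<in>?T. \<mu> s *\<^sub>R s)"
      using sum.mono_neutral_right[OF finite_stab[of E] sub, of "\<lambda>s. \<mu> s *\<^sub>R s"] by blast
    then show ?thesis using mu(3) by simp
  qed
  moreover have "(\<Sum>s\<in>?T. \<mu> s *\<^sub>R s) \<in> convex hull (Sset E W t)"
  proof (rule convex_sum[OF fT convex_convex_hull])
    show "sum \<mu> ?T = 1" by fact
    show "\<And>i. i \<in> ?T \<Longrightarrow> 0 \<le> \<mu> i" by auto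
    show "\<And>i. i \<in> ?T \<Longrightarrow> i \<in> convex hull (Sset E W t)" using T by (auto intro: hull_inc)
  qed
  ultimately show ?thesis by (simp only:)
qed

theorem lemma6:
  fixes E :: "'v::finite set set" and W :: "nat \<Rightarrow> 'v set" and r :: nat
    and c :: "real ^ 'v" and d :: real
  assumes "simple_graph E"
    and "inj_on W {1..r}"
    and "\<forall>t\<in>{1..r}. is_clique (Gseq E W (t - 1)) (W t) \<and> card (W t) \<ge> 2"
    and "\<forall>x\<in>STAB (Gseq E W r). c \<bullet> x \<le> d"
  shows "\<forall>t\<in>{0..r}. \<forall>x\<in>Fset E W t. fval W r c (lamS E W r c d) t x \<le> d"
proof -
  let ?L = "lamS E W r c d"
  have cl: "\<forall>j\<in>{1..t}. is_clique (Gseq E W (j - 1)) (W j)" if "t \<le> r" for t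
    using assms(3) that by auto
  have key: "\<forall>x\<in>Fset E W (r - k). fval W r c ?L (r - k) x \<le> d" if "k \<le> r" for k
    using that
  proof (induction k)
    case 0
    have "Sset E W r \<subseteq> STAB (Gseq E W r)"
    proof
      fix s assume "s \<in> Sset E W r"
      then obtain S where "s = char_vec S" "is_stable (Gseq E W r) S" using Sset_stable by blast
      then show "s \<in> STAB (Gseq E W r)" unfolding STAB_def stab_vecs_def by (auto intro: hull_inc)
    qed
    note sub0 = this
    have cv: "convex (convex hull stab_vecs (Gseq E W r))" by (rule convex_convex_hull)
    have sub: "convex hull (Sset E W r) \<subseteq> STAB (Gseq E W r)"
      using hull_minimal[where S=convex, OF sub0[unfolded STAB_def] cv] unfolding STAB_def .
    show ?case
    proof
      fix x assume x: "x \<in> Fset E W (r - 0)"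
      then have "x \<in> convex hull Sset E W r" using Fset_hull[OF cl[of r]] by simp
      then have "x \<in> STAB (Gseq E W r)" using sub by blast
      then have "c \<bullet> x \<le> d" using assms(4) by blast
      then show "fval W r c ?L (r - 0) x \<le> d" by (simp add: fval_def)
    qed
  next
    case (Suc k)
    define l where "l = r - k"
    have l1: "1 \<le> l" "l \<le> r" using Suc.prems unfolding l_def by auto
    have lm: "r - Suc k = l - 1" unfolding l_def by simp
    have IH: "\<forall>x\<in>Fset E W l. fval W r c ?L l x \<le> d" using Suc unfolding l_def by simp
    have Lval: "?L l = max0 {fval W r c (lam_steps E W r c d (r - l)) l x - d | x.
                 x \<in> Sset E W (l - 1) \<and> xsum (W l) x = 0}"
    proof -
      have "?L l = lam_steps E W r c d (Suc (r - l)) l"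
        unfolding lamS_def using l1 by (intro agree) auto
      also have "\<dots> = max0 {fval W r c (lam_steps E W r c d (r - l)) l x - d | x.
                 x \<in> Sset E W (l - 1) \<and> xsum (W l) x = 0}"
        using l1 by (simp add: Let_def)
      finally show ?thesis .
    qed
    have fv: "fval W r c (lam_steps E W r c d (r - l)) l x = fval W r c ?L l x" for x
    proof -
      have "(\<Sum>k\<in>{l+1..r}. lam_steps E W r c d (r - l) k * (xsum (W k) x - 1))
          = (\<Sum>k\<in>{l+1..r}. lam_steps E W r c d r k * (xsum (W k) x - 1))"
      proof (rule sum.cong)
        fix k assume "k \<in> {l+1..r}"
        then have "lam_steps E W r c d r k = lam_steps E W r c d (r - l) k"
          using l1 by (intro agree) auto
        then show "lam_steps E W r c d (r - l) k * (xsum (W k) x - 1) = lam_steps E W r c d r k * (xsum (W k) x - 1)"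
          by simp
      qed simp
      then show ?thesis unfolding fval_def lamS_def by (simp only:)
    qed
    have pts: "fval W r c ?L (l - 1) s \<le> d" if s: "s \<in> Sset E W (l - 1)" for s
    proof -
      have split: "fval W r c ?L (l - 1) s = fval W r c ?L l s + ?L l * (xsum (W l) s - 1)"
        unfolding fval_def using l1 by (simp add: sum.atLeast_Suc_atMost)
      obtain S where S: "s = char_vec S" "is_stable (Gseq E W (l - 1)) S" using Sset_stable[OF s] by blast
      have "card (W l \<inter> S) \<le> 1" using clique_card[OF S(2)] assms(3) l1 by auto
      then have "card (W l \<inter> S) = 0 \<or> card (W l \<inter> S) = 1" by linarith
      then show ?thesis
      proof
        assume c1: "card (W l \<inter> S) = 1"
        have "s \<in> Fset E W l"
        proof -
          have "s \<in> Fset E W (l - 1)" using s unfolding Sset_def by auto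
          moreover have "xsum (W l) s = 1" using c1 S(1) by (simp add: xsum_char)
          ultimately have "\<forall>j\<in>{1..l}. xsum (W j) s = 1"
            unfolding Fset_def
          proof (intro ballI)
            fix j assume j: "j \<in> {1..l}"
              and a: "s \<in> {x \<in> STAB E. \<forall>j\<in>{1..l - 1}. xsum (W j) x = 1}" "xsum (W l) s = 1"
            show "xsum (W j) s = 1"
            proof (cases "j = l")
              case True then show ?thesis using a by simp
            next
              case False then have "j \<in> {1..l - 1}" using j by auto
              then show ?thesis using a by auto
            qed
          qed
          then show ?thesis using \<open>s \<in> Fset E W (l - 1)\<close> unfolding Fset_def by auto
        qed
        then have "fval W r c ?L l s \<le> d" using IH by blast
        moreover have "xsum (W l) s = 1" using c1 S(1) by (simp add: xsum_char)
        ultimately show ?thesis using split by simp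
      next
        assume c0: "card (W l \<inter> S) = 0"
        let ?A = "{fval W r c (lam_steps E W r c d (r - l)) l x - d | x.
                 x \<in> Sset E W (l - 1) \<and> xsum (W l) x = 0}"
        have xs0: "xsum (W l) s = 0" using c0 S(1) by (simp add: xsum_char)
        have mem: "fval W r c ?L l s - d \<in> ?A" unfolding fv using s xs0 by blast
        have "?A \<subseteq> (\<lambda>x. fval W r c (lam_steps E W r c d (r - l)) l x - d) ` stab_vecs E"
          unfolding Sset_def by auto
        then have "finite ?A" using finite_stab finite_subset by blast
        then have "fval W r c ?L l s - d \<le> ?L l" using mem Lval unfolding max0_def by auto
        then show ?thesis using split xs0 by simp
      qed
    qed
    have "Sset E W (l - 1) \<subseteq> {x. fval W r c ?L (l - 1) x \<le> d}" using pts by auto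
    then have "convex hull (Sset E W (l - 1)) \<subseteq> {x. fval W r c ?L (l - 1) x \<le> d}"
      using hull_minimal[where S=convex, OF _ fval_convex] by blast
    moreover have "Fset E W (l - 1) \<subseteq> convex hull (Sset E W (l - 1))"
      using Fset_hull[OF cl, of "l - 1"] l1 by auto
    ultimately show ?case unfolding lm by blast
  qed
  show ?thesis
  proof (intro ballI)
    fix t x assume t: "t \<in> {0..r}" and x: "x \<in> Fset E W t"
    have e: "r - (r - t) = t" using t by auto
    have "r - t \<le> r" by simp
    from key[OF this] have "\<forall>x\<in>Fset E W t. fval W r c ?L t x \<le> d" unfolding e .
    then show "fval W r c ?L t x \<le> d" using x by blast
  qed
qed

end
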